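(* Let $d$ be the discriminant of a real quadratic field and $p$ an odd prime not dividing $d$. Then $$\prod_{0<c<d/2}(-1)^{\lfloor pc/d\rfloor(\frac dc)}=\Big(\frac dp\Big)^{[d=8\text{ or } d\text{ is prime}]}.$$
   Context: $(\frac d{\cdot})$ is the Kronecker symbol (so $(\frac dc)=0$ when $\gcd(c,d)>1$); $\lfloor x\rfloor$ is the integer part. For an assertion $P$, $[P]=1$ if $P$ holds and $[P]=0$ otherwise. *)

theory Defs
  imports "HOL-Number_Theory.Number_Theory" "HOL-Computational_Algebra.Squarefree"
begin

definition kronecker_prime :: "int \<Rightarrow> int \<Rightarrow> int" where
  "kronecker_prime d p =
     (if p = 2 then (if even d then 0 else if d mod 8 = 1 \<or> d mod 8 = 7 then 1 else -1)
      else Legendre d p)"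

definition kronecker :: "int \<Rightarrow> int \<Rightarrow> int" where
  "kronecker d n = (\<Prod>p\<in>#prime_factorization n. kronecker_prime d p)"

definition real_quad_disc :: "int \<Rightarrow> bool" where
  "real_quad_disc d \<longleftrightarrow> d > 1 \<and>
     ((d mod 4 = 1 \<and> squarefree d) \<or>
      (d mod 4 = 0 \<and> squarefree (d div 4) \<and> (d div 4) mod 4 \<in> {2, 3}))"

end

theory Submission
  imports Defs
begin


definition Hs :: "int \<Rightarrow> int set" where
  "Hs n = {c. 0 < c \<and> 2*c < n \<and> coprime c n}"

definition Gm :: "int \<Rightarrow> int \<Rightarrow> int \<Rightarrow> int" where
  "Gm n p c = (if 2 * ((p*c) mod n) < n then (p*c) mod n else n - (p*c) mod n)"

lemma finite_Hs: "finite (Hs n)"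
proof -
  have "Hs n \<subseteq> {0..n}" by (auto simp: Hs_def)
  then show ?thesis by (rule finite_subset) simp
qed

lemma coprime_pos_lt:
  fixes r n :: int
  assumes "coprime r n" "n > 2" "0 \<le> r" "r < n"
  shows "0 < r \<and> 2 * r \<noteq> n"
proof
  show "0 < r"
  proof (rule ccontr)
    assume "\<not> 0 < r" then have "r = 0" using assms by simp
    then show False using assms by simp
  qed
  show "2 * r \<noteq> n"
  proof
    assume h: "2 * r = n"
    then have "r dvd n" by auto
    then have "is_unit r" using assms(1) by (meson coprime_common_divisor dvd_refl)
    then have "r = 1" using \<open>0 < r\<close> by simp
    then show False using h assms by simp
  qed
qed

lemma Gm_in:
  assumes "coprime p n" "n > 2" "c \<in> Hs n"
  shows "Gm n p c \<in> Hs n"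
proof -
  let ?r = "(p*c) mod n"
  have cc: "coprime c n" using assms by (simp add: Hs_def)
  have "coprime (p*c) n" using assms cc by simp
  then have cr: "coprime ?r n" using assms by (simp add: coprime_mod_left_iff)
  have r0: "0 \<le> ?r" "?r < n" using assms by simp_all
  from coprime_pos_lt[OF cr \<open>n > 2\<close> r0] have rr: "0 < ?r" "2 * ?r \<noteq> n" by auto
  show ?thesis
  proof (cases "2 * ?r < n")
    case True
    then show ?thesis using rr cr by (simp add: Gm_def Hs_def)
  next
    case False
    have "coprime (n - ?r) n"
      using cr by (metis coprime_minus_left_iff coprime_add_one_left add.commute diff_conv_add_uminus coprime_commute gcd_add_mult mult_1 coprime_iff_gcd_eq_1)
    then show ?thesis using False rr r0 by (simp add: Gm_def Hs_def)
  qed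
qed

lemma Gm_cong:
  "[Gm n p c = p*c] (mod n) \<or> [Gm n p c = - (p*c)] (mod n)"
proof (cases "2 * ((p*c) mod n) < n")
  case True
  then show ?thesis by (simp add: Gm_def cong_def)
next
  case False
  then have "Gm n p c = n - (p*c) mod n" by (simp add: Gm_def)
  then have "[Gm n p c = - (p*c)] (mod n)"
  proof -
    have "n - (p*c) mod n + p*c = n * (1 + (p*c) div n)"
      using div_mult_mod_eq[of "p*c" n] by (simp add: algebra_simps)
    then show ?thesis by (simp add: cong_iff_dvd_diff \<open>Gm n p c = n - (p*c) mod n\<close>)
  qed
  then show ?thesis by simp
qed

lemma Hs_cong_eq:
  assumes "c \<in> Hs n" "c' \<in> Hs n" "[c = c'] (mod n) \<or> [c = - c'] (mod n)"
  shows "c = c'"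
  using assms(3)
proof
  assume "[c = c'] (mod n)"
  then show ?thesis using assms(1,2) by (simp add: Hs_def cong_def)
next
  assume "[c = - c'] (mod n)"
  then have "n dvd c + c'" by (simp add: cong_iff_dvd_diff)
  then obtain k where k: "c + c' = n * k" by blast
  have "0 < c + c'" "c + c' < n" using assms(1,2) by (auto simp: Hs_def)
  then have "0 < n * k" "n * k < n * 1" using k by auto
  then have "0 < k" "k < 1" using assms(1) by (auto simp: Hs_def zero_less_mult_iff mult_less_cancel_left)
  then show ?thesis by simp
qed

lemma Gm_inj:
  assumes "coprime p n"
  shows "inj_on (Gm n p) (Hs n)"
proof (rule inj_onI)
  fix c c' assume c: "c \<in> Hs n" and c': "c' \<in> Hs n" and e: "Gm n p c = Gm n p c'"
  have "[p*c = p*c'] (mod n) \<or> [p*c = p*(- c')] (mod n)"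
  proof -
    have A: "[Gm n p c = p*c] (mod n) \<or> [Gm n p c = - (p*c)] (mod n)" by (rule Gm_cong)
    have B: "[Gm n p c = p*c'] (mod n) \<or> [Gm n p c = - (p*c')] (mod n)" using Gm_cong[of n p c'] e by simp
    show ?thesis
    proof (cases "[Gm n p c = p*c] (mod n)")
      case T1: True
      show ?thesis
      proof (cases "[Gm n p c = p*c'] (mod n)")
        case True then show ?thesis using T1 by (meson cong_sym cong_trans)
      next
        case False then have "[Gm n p c = - (p*c')] (mod n)" using B by blast
        then show ?thesis using T1 by (metis cong_sym cong_trans mult_minus_right)
      qed
    next
      case F1: False
      then have A': "[Gm n p c = - (p*c)] (mod n)" using A by blast
      then have A'': "[- Gm n p c = p*c] (mod n)" by (metis cong_minus_minus_iff minus_minus)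
      show ?thesis
      proof (cases "[Gm n p c = p*c'] (mod n)")
        case True
        then have "[- Gm n p c = p*(-c')] (mod n)" by (metis cong_minus_minus_iff mult_minus_right)
        then show ?thesis using A'' by (meson cong_sym cong_trans)
      next
        case False then have "[Gm n p c = - (p*c')] (mod n)" using B by blast
        then have "[- Gm n p c = p*c'] (mod n)" by (metis cong_minus_minus_iff minus_minus)
        then show ?thesis using A'' by (meson cong_sym cong_trans)
      qed
    qed
  qed
  then have "[c = c'] (mod n) \<or> [c = - c'] (mod n)"
    using cong_mult_lcancel[OF assms] by blast
  then show "c = c'" using Hs_cong_eq c c' by blast
qed

lemma Gm_bij:
  assumes "coprime p n" "n > 2"
  shows "bij_betw (Gm n p) (Hs n) (Hs n)"
  unfolding bij_betw_def
  using Gm_inj[OF assms(1)] endo_inj_surj[OF finite_Hs _ Gm_inj[OF assms(1)]] Gm_in[OF assms] by blast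




definition sg :: "int \<Rightarrow> int \<Rightarrow> int \<Rightarrow> int" where
  "sg n p c = (if 2 * ((p*c) mod n) < n then 1 else -1)"

lemma prod_sg:
  "(\<Prod>c\<in>A. sg n p c) = (-1) ^ card {c\<in>A. \<not> 2 * ((p*c) mod n) < n}" if "finite A"
proof -
  have "(\<Prod>c\<in>A. sg n p c) = (\<Prod>c\<in>A \<inter> {c. 2 * ((p*c) mod n) < n}. 1) * (\<Prod>c\<in>A \<inter> - {c. 2 * ((p*c) mod n) < n}. -1)"
    unfolding sg_def by (rule prod.If_cases[OF that])
  also have "\<dots> = (-1) ^ card (A \<inter> - {c. 2 * ((p*c) mod n) < n})" by simp
  also have "A \<inter> - {c. 2 * ((p*c) mod n) < n} = {c\<in>A. \<not> 2 * ((p*c) mod n) < n}" by auto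
  finally show ?thesis .
qed

lemma sg_cong: "[p * c = sg n p c * Gm n p c] (mod n)"
proof (cases "2 * ((p*c) mod n) < n")
  case True
  then show ?thesis by (simp add: sg_def Gm_def cong_def)
next
  case False
  have "p*c - ((p*c) mod n - n) = n * (1 + (p*c) div n)"
    using div_mult_mod_eq[of "p*c" n] by (simp add: algebra_simps)
  then show ?thesis using False by (simp add: sg_def Gm_def cong_iff_dvd_diff)
qed

lemma gauss_prod:
  assumes "coprime p n" "n > 2"
  shows "[p ^ card (Hs n) = (-1) ^ card {c\<in>Hs n. \<not> 2 * ((p*c) mod n) < n}] (mod n)"
proof -
  have "[(\<Prod>c\<in>Hs n. p * c) = (\<Prod>c\<in>Hs n. sg n p c * Gm n p c)] (mod n)"
    by (rule cong_prod) (rule sg_cong)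
  also have "(\<Prod>c\<in>Hs n. sg n p c * Gm n p c) = (\<Prod>c\<in>Hs n. sg n p c) * (\<Prod>c\<in>Hs n. Gm n p c)"
    by (rule prod.distrib)
  also have "(\<Prod>c\<in>Hs n. Gm n p c) = (\<Prod>c\<in>Hs n. c)"
    by (rule prod.reindex_bij_betw[OF Gm_bij[OF assms]])
  also have "(\<Prod>c\<in>Hs n. p * c) = p ^ card (Hs n) * (\<Prod>c\<in>Hs n. c)"
    by (simp add: prod.distrib)
  finally have "[p ^ card (Hs n) * (\<Prod>c\<in>Hs n. c) = (-1) ^ card {c\<in>Hs n. \<not> 2 * ((p*c) mod n) < n} * (\<Prod>c\<in>Hs n. c)] (mod n)"
    by (simp add: prod_sg[OF finite_Hs])
  moreover have "coprime (\<Prod>c\<in>Hs n. c) n"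
    by (rule prod_coprime_left) (simp add: Hs_def)
  ultimately show ?thesis using cong_mult_rcancel by blast
qed

lemma odd_floor_parity:
  assumes "coprime p n" "n > 2" "odd n" "odd p"
  shows "even ((\<Sum>c\<in>Hs n. (p*c) div n) + int (card {c\<in>Hs n. \<not> 2 * ((p*c) mod n) < n}))"
proof -
  define f where "f c = (if 2 * ((p*c) mod n) < n then 0 else (1::int))" for c
  have pt: "even ((p*c) div n + c + Gm n p c + f c)" for c
  proof -
    let ?q = "(p*c) div n" and ?r = "(p*c) mod n"
    have e1: "n * ?q + ?r - p * c = 0" by (simp add: div_mult_mod_eq)
    have e2: "even ((n - 1) * ?q)" "even ((p+1)*c)" using assms by auto
    have "even (?q + c + ?r)"
    proof -
      have "?q + c + ?r = (n * ?q + ?r - p * c) - (n - 1) * ?q + (p+1)*c" by (simp add: algebra_simps)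
      then show ?thesis using e1 e2 by simp
    qed
    moreover have "even (Gm n p c + f c - ?r)"
    proof (cases "2 * ?r < n")
      case True then show ?thesis by (simp add: Gm_def f_def)
    next
      case False
      then have h: "Gm n p c + f c - ?r = (n + 1) - 2 * ?r" by (simp add: Gm_def f_def)
      obtain k where k: "n = 2*k+1" using \<open>odd n\<close> oddE by blast
      have "(n + 1) - 2 * ?r = 2 * (k + 1 - ?r)" using k by simp
      then show ?thesis unfolding h by simp
    qed
    ultimately have "even ((?q + c + ?r) + (Gm n p c + f c - ?r))" by (rule dvd_add)
    moreover have "(?q + c + ?r) + (Gm n p c + f c - ?r) = ?q + c + Gm n p c + f c" by simp
    ultimately show ?thesis by metis
  qed
  have "even (\<Sum>c\<in>Hs n. (p*c) div n + c + Gm n p c + f c)"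
    by (rule dvd_sum) (use pt in auto)
  also have "(\<Sum>c\<in>Hs n. (p*c) div n + c + Gm n p c + f c) =
     (\<Sum>c\<in>Hs n. (p*c) div n) + (\<Sum>c\<in>Hs n. c) + (\<Sum>c\<in>Hs n. Gm n p c) + (\<Sum>c\<in>Hs n. f c)"
    by (simp add: sum.distrib)
  also have "(\<Sum>c\<in>Hs n. Gm n p c) = (\<Sum>c\<in>Hs n. c)"
    by (rule sum.reindex_bij_betw[OF Gm_bij[OF assms(1,2)]])
  also have "(\<Sum>c\<in>Hs n. f c) = int (card {c\<in>Hs n. \<not> 2 * ((p*c) mod n) < n})"
  proof -
    have "(\<Sum>c\<in>Hs n. f c) = (\<Sum>c\<in>{c\<in>Hs n. \<not> 2 * ((p*c) mod n) < n}. 1)"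
      unfolding f_def by (rule sum.mono_neutral_cong_right) (auto simp: finite_Hs)
    then show ?thesis by simp
  qed
  finally show ?thesis by simp
qed




lemma coprime_double_iff:
  fixes c n :: int
  assumes "even n"
  shows "coprime c (2*n) \<longleftrightarrow> coprime c n"
  using assms by (metis coprime_mult_right_iff evenE)

lemma odd_mod_even: fixes x d :: int assumes "even d" "odd x" shows "odd (x mod d)"
  using assms by (metis dvd_mod_iff)

lemma psi_lemma:
  fixes d n p :: int and \<psi> :: "int \<Rightarrow> int"
  assumes dn: "d = 2 * n" and n2: "n > 2" and ne: "even n" and cp: "coprime p d"
    and pm: "\<And>x y. odd x \<Longrightarrow> odd y \<Longrightarrow> \<psi> (x*y) = \<psi> x * \<psi> y"
    and pmod: "\<And>x. \<psi> (x mod d) = \<psi> x"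
    and phalf: "\<And>x. odd x \<Longrightarrow> \<psi> (n - x) = \<psi> x"
    and pneg: "\<And>x. odd x \<Longrightarrow> \<psi> (- x) = - \<psi> x"
    and pnz: "\<And>x. odd x \<Longrightarrow> \<psi> x \<noteq> 0"
  shows "\<psi> p ^ card (Hs n) = (-1) ^ card {c\<in>Hs n. \<not> 2 * ((p*c) mod d) < d}"
proof -
  have cpn: "coprime p n" using cp dn coprime_double_iff[OF ne] by simp
  have podd: "odd p" using cp dn by auto
  have codd: "odd c" if "c \<in> Hs n" for c
    using that ne by (auto simp: Hs_def)
  have pt: "\<psi> (p*c) = sg d p c * \<psi> (Gm n p c)" if c: "c \<in> Hs n" for c
  proof -
    define r where "r = (p*c) mod d"
    have d0: "d > 0" using dn n2 by simp
    have r0: "0 \<le> r" "r < d" using d0 by (simp_all add: r_def)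
    have rodd: "odd r" unfolding r_def using odd_mod_even[of d "p*c"] dn podd codd[OF c] by simp
    have rn: "(p*c) mod n = r mod n" unfolding r_def dn by (simp add: mod_mod_cancel)
    have ps: "\<psi> (p*c) = \<psi> r" using pmod r_def by simp
    have rne: "r \<noteq> n" using rodd ne by auto
    show ?thesis
    proof (cases "r < n")
      case True
      then have rn': "(p*c) mod n = r" using rn r0 by simp
      have sg1: "sg d p c = 1" unfolding sg_def r_def[symmetric] using True dn by simp
      show ?thesis
      proof (cases "2 * r < n")
        case True then show ?thesis using ps sg1 rn' by (simp add: Gm_def)
      next
        case False then show ?thesis using ps sg1 rn' phalf[OF rodd] by (simp add: Gm_def)
      qed
    next
      case False
      then have rgt: "n < r" using rne by simp
      have "r mod n = r - n"
      proof -
        have "r mod n = ((r - n) + n) mod n" by simp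
        also have "\<dots> = (r - n) mod n" by (rule mod_add_self2)
        also have "\<dots> = r - n" using rgt r0 dn by (intro mod_pos_pos_trivial) auto
        finally show ?thesis .
      qed
      then have rn': "(p*c) mod n = r - n" using rn by simp
      have sg1: "sg d p c = -1" unfolding sg_def r_def[symmetric] using rgt dn by simp
      have oddnr: "odd (n - r)" using rodd ne by simp
      show ?thesis
      proof (cases "2 * (r - n) < n")
        case True
        have "\<psi> (r - n) = \<psi> (- (n - r))" by simp
        also have "\<dots> = - \<psi> r" using pneg[OF oddnr] phalf[OF rodd] by simp
        finally show ?thesis using ps sg1 rn' True by (simp add: Gm_def)
      next
        case False
        have "\<psi> (d - r) = \<psi> ((d - r) mod d)" using pmod[of "d - r"] by simp
        also have "(d - r) mod d = (- r) mod d" by (simp add: mod_diff_left_eq[symmetric])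
        also have "\<psi> ((- r) mod d) = - \<psi> r" using pmod[of "- r"] pneg[OF rodd] by simp
        finally have "\<psi> (d - r) = - \<psi> r" .
        moreover have "n - (r - n) = d - r" using dn by simp
        ultimately show ?thesis using ps sg1 rn' False by (simp add: Gm_def)
      qed
    qed
  qed
  have "(\<Prod>c\<in>Hs n. \<psi> (p*c)) = \<psi> p ^ card (Hs n) * (\<Prod>c\<in>Hs n. \<psi> c)"
    using pm[OF podd] codd by (simp add: prod.distrib)
  moreover have "(\<Prod>c\<in>Hs n. \<psi> (p*c)) = (\<Prod>c\<in>Hs n. sg d p c) * (\<Prod>c\<in>Hs n. \<psi> (Gm n p c))"
    using pt by (simp add: prod.distrib)
  moreover have "(\<Prod>c\<in>Hs n. \<psi> (Gm n p c)) = (\<Prod>c\<in>Hs n. \<psi> c)"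
    by (rule prod.reindex_bij_betw[OF Gm_bij[OF cpn n2]])
  moreover have "(\<Prod>c\<in>Hs n. \<psi> c) \<noteq> 0" using pnz codd by (simp add: finite_Hs)
  ultimately show ?thesis by (simp add: prod_sg[OF finite_Hs])
qed




lemma coprime_nminus: "coprime (n - c) n \<longleftrightarrow> coprime (c::int) n"
  by (metis coprime_iff_gcd_eq_1 gcd_diff2)

lemma Hs_split:
  fixes n :: int
  assumes n2: "n > 2"
  shows "{c. 0 < c \<and> c < n \<and> coprime c n} = Hs n \<union> (\<lambda>c. n - c) ` Hs n"
    and "Hs n \<inter> (\<lambda>c. n - c) ` Hs n = {}"
    and "inj_on (\<lambda>c. n - c) (Hs n)"
proof -
  show "{c. 0 < c \<and> c < n \<and> coprime c n} = Hs n \<union> (\<lambda>c. n - c) ` Hs n"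
  proof
    show "{c. 0 < c \<and> c < n \<and> coprime c n} \<subseteq> Hs n \<union> (\<lambda>c. n - c) ` Hs n"
    proof
      fix c assume "c \<in> {c. 0 < c \<and> c < n \<and> coprime c n}"
      then have c: "0 < c" "c < n" "coprime c n" by auto
      have "2 * c \<noteq> n" using coprime_pos_lt[OF c(3) n2] c by auto
      show "c \<in> Hs n \<union> (\<lambda>c. n - c) ` Hs n"
      proof (cases "2 * c < n")
        case True then show ?thesis using c by (auto simp: Hs_def)
      next
        case False
        then have "n - c \<in> Hs n" using c \<open>2 * c \<noteq> n\<close> coprime_nminus by (auto simp: Hs_def)
        moreover have "c = n - (n - c)" by simp
        ultimately show ?thesis by blast
      qed
    qed
    show "Hs n \<union> (\<lambda>c. n - c) ` Hs n \<subseteq> {c. 0 < c \<and> c < n \<and> coprime c n}"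
      using coprime_nminus by (auto simp: Hs_def)
  qed
  show "Hs n \<inter> (\<lambda>c. n - c) ` Hs n = {}" by (auto simp: Hs_def)
  show "inj_on (\<lambda>c. n - c) (Hs n)" by (auto simp: inj_on_def)
qed

lemma card_Hs_totient:
  fixes n :: int
  assumes n2: "n > 2"
  shows "2 * card (Hs n) = totient (nat n)"
proof -
  have "int ` totatives (nat n) = {c. 0 < c \<and> c < n \<and> coprime c n}"
  proof
    show "int ` totatives (nat n) \<subseteq> {c. 0 < c \<and> c < n \<and> coprime c n}"
    proof
      fix x assume "x \<in> int ` totatives (nat n)"
      then obtain k where k: "k \<in> totatives (nat n)" "x = int k" by blast
      then have "0 < k" "k \<le> nat n" "coprime k (nat n)" by (auto simp: in_totatives_iff)
      then have "coprime x n" using k n2 by (metis coprime_int_iff int_nat_eq less_imp_le order.strict_trans zero_less_numeral)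
      moreover have "x \<noteq> n" using \<open>coprime x n\<close> n2 by auto
      ultimately show "x \<in> {c. 0 < c \<and> c < n \<and> coprime c n}" using k \<open>0 < k\<close> \<open>k \<le> nat n\<close> by auto
    qed
    show "{c. 0 < c \<and> c < n \<and> coprime c n} \<subseteq> int ` totatives (nat n)"
    proof
      fix x assume "x \<in> {c. 0 < c \<and> c < n \<and> coprime c n}"
      then have x: "0 < x" "x < n" "coprime x n" by auto
      have "coprime (nat x) (nat n)" using x n2
        by (metis coprime_int_iff int_nat_eq less_imp_le order.strict_trans)
      then have "nat x \<in> totatives (nat n)" using x by (auto simp: in_totatives_iff)
      then show "x \<in> int ` totatives (nat n)" using x by (metis image_eqI int_nat_eq less_imp_le)
    qed
  qed
  then have "totient (nat n) = card {c. 0 < c \<and> c < n \<and> coprime c n}"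
    unfolding totient_def by (metis card_image inj_on_of_nat)
  also have "\<dots> = card (Hs n) + card ((\<lambda>c. n - c) ` Hs n)"
    using Hs_split[OF n2] finite_Hs by (simp add: card_Un_disjoint)
  also have "card ((\<lambda>c. n - c) ` Hs n) = card (Hs n)"
    using Hs_split(3)[OF n2] by (rule card_image)
  finally show ?thesis by simp
qed

lemma pair_point:
  fixes d n p c :: int
  assumes dn: "d = 2 * n" and n2: "n > 2" and ne: "even n" and podd: "odd p" and codd: "odd c"
  shows "(p*c) div d + (p*(n - c)) div d = (p - 1) div 2 - (if 2 * ((p*c) mod d) < d then 0 else 1)"
proof -
  obtain t where t: "p = 2*t+1" using podd oddE by blast
  define q where "q = (p*c) div d"
  define r where "r = (p*c) mod d"
  have d0: "d > 0" using dn n2 by simp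
  have r0: "0 \<le> r" "r < d" using d0 by (simp_all add: r_def)
  have pc: "p*c = d*q + r" by (simp add: q_def r_def)
  have rodd: "odd r" unfolding r_def using odd_mod_even[of d "p*c"] dn podd codd by simp
  have rne: "r \<noteq> n" using rodd ne by auto
  have "p*(n - c) = (n - r) + d * (t - q)" using pc t dn by (simp add: algebra_simps)
  then have e: "(p*(n - c)) div d = (t - q) + (n - r) div d" using d0 by simp
  have t2: "(p - 1) div 2 = t" using t by simp
  show ?thesis
  proof (cases "r < n")
    case True
    then have "(n - r) div d = 0" using r0 dn by (intro div_pos_pos_trivial) auto
    moreover have "2 * ((p*c) mod d) < d" unfolding r_def[symmetric] using True dn by simp
    ultimately show ?thesis using e t2 q_def by simp
  next
    case False
    then have rgt: "n < r" using rne by simp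
    have "(n - r) div d = ((n - r + d) + d * (-1)) div d" by simp
    also have "\<dots> = -1 + (n - r + d) div d" using d0 by (simp only: div_mult_self2)
    also have "(n - r + d) div d = 0" using r0 rgt dn by (intro div_pos_pos_trivial) auto
    finally have "(n - r) div d = -1" by simp
    moreover have "\<not> 2 * ((p*c) mod d) < d" unfolding r_def[symmetric] using rgt dn by simp
    ultimately show ?thesis using e t2 q_def by simp
  qed
qed

lemma pair_sum:
  fixes d n p :: int
  assumes dn: "d = 2 * n" and n2: "n > 2" and ne: "even n" and cp: "coprime p d"
  shows "(\<Sum>c\<in>Hs d. (p*c) div d) = int (card (Hs n)) * ((p - 1) div 2) - int (card {c\<in>Hs n. \<not> 2 * ((p*c) mod d) < d})"
proof -
  have podd: "odd p" using cp dn by auto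
  have codd: "odd c" if "c \<in> Hs n" for c using that ne by (auto simp: Hs_def)
  have "Hs d = {c. 0 < c \<and> c < n \<and> coprime c n}"
    using dn coprime_double_iff[OF ne] by (auto simp: Hs_def)
  then have HS: "Hs d = Hs n \<union> (\<lambda>c. n - c) ` Hs n" using Hs_split(1)[OF n2] by simp
  have "(\<Sum>c\<in>Hs d. (p*c) div d) = (\<Sum>c\<in>Hs n. (p*c) div d) + (\<Sum>c\<in>(\<lambda>c. n - c) ` Hs n. (p*c) div d)"
    unfolding HS using Hs_split(2)[OF n2] finite_Hs by (simp add: sum.union_disjoint)
  also have "(\<Sum>c\<in>(\<lambda>c. n - c) ` Hs n. (p*c) div d) = (\<Sum>c\<in>Hs n. (p*(n - c)) div d)"
    using Hs_split(3)[OF n2] by (simp add: sum.reindex)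
  also have "(\<Sum>c\<in>Hs n. (p*c) div d) + (\<Sum>c\<in>Hs n. (p*(n - c)) div d)
      = (\<Sum>c\<in>Hs n. (p - 1) div 2 - (if 2 * ((p*c) mod d) < d then 0 else 1))"
    unfolding sum.distrib[symmetric] using pair_point[OF dn n2 ne podd codd] by (intro sum.cong) auto
  also have "\<dots> = int (card (Hs n)) * ((p - 1) div 2) - (\<Sum>c\<in>Hs n. (if 2 * ((p*c) mod d) < d then 0 else 1))"
    by (simp add: sum_subtractf)
  also have "(\<Sum>c\<in>Hs n. (if 2 * ((p*c) mod d) < d then 0 else 1)) = (\<Sum>c\<in>{c\<in>Hs n. \<not> 2 * ((p*c) mod d) < d}. (1::int))"
    by (rule sum.mono_neutral_cong_right) (auto simp: finite_Hs)
  finally show ?thesis by simp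
qed




lemma odd_prod_mset: "(\<And>x. x \<in># M \<Longrightarrow> odd (x::int)) \<Longrightarrow> odd (prod_mset M)"
  by (induction M) auto

lemma legendre_cases: "Legendre a q = 0 \<or> Legendre a q = 1 \<or> Legendre a q = -1"
  by (simp add: Legendre_def)

lemma kron_zero:
  fixes c d :: int
  assumes "c > 0" "\<not> coprime c d"
  shows "kronecker d c = 0"
proof -
  have g0: "gcd c d \<noteq> 0" using assms by simp
  have gu: "\<not> is_unit (gcd c d)" using assms by (simp add: coprime_iff_gcd_eq_1)
  obtain q where q: "prime q" "q dvd gcd c d" using prime_divisor_exists[OF g0 gu] by blast
  have qc: "q dvd c" and qd: "q dvd d" using q by auto
  have qin: "q \<in># prime_factorization c" using q qc assms by (simp add: in_prime_factors_iff)
  have "kronecker_prime d q = 0"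
  proof (cases "q = 2")
    case True then show ?thesis using qd by (simp add: kronecker_prime_def)
  next
    case False
    have "[d = 0] (mod q)" using qd by (simp add: cong_0_iff)
    then show ?thesis using False by (simp add: kronecker_prime_def Legendre_def)
  qed
  then have "0 \<in># image_mset (kronecker_prime d) (prime_factorization c)" using qin by force
  then show ?thesis by (simp add: kronecker_def)
qed

lemma kron_odd:
  fixes c d :: int
  assumes "c > 0" "coprime c d"
  shows "odd (kronecker d c)"
  unfolding kronecker_def
proof (rule odd_prod_mset)
  fix x assume "x \<in># image_mset (kronecker_prime d) (prime_factorization c)"
  then obtain q where q: "q \<in># prime_factorization c" "x = kronecker_prime d q" by auto
  have qp: "prime q" "q dvd c" using q by (auto simp: in_prime_factors_iff)
  have nqd: "\<not> q dvd d"
  proof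
    assume "q dvd d"
    then have "is_unit q" using assms(2) qp by (meson coprime_common_divisor)
    then show False using qp by auto
  qed
  show "odd x"
  proof (cases "q = 2")
    case True
    then have "odd d" using nqd by simp
    then show ?thesis using q True by (auto simp: kronecker_prime_def)
  next
    case False
    have "\<not> [d = 0] (mod q)" using nqd by (simp add: cong_0_iff)
    then show ?thesis using q False by (auto simp: kronecker_prime_def Legendre_def)
  qed
qed

lemma prod_powi:
  fixes f :: "'a \<Rightarrow> int"
  assumes "finite A"
  shows "(\<Prod>c\<in>A. (-1::real) powi f c) = (-1) powi (\<Sum>c\<in>A. f c)"
  using assms
proof (induction A rule: finite_induct)
  case empty then show ?case by simp
next
  case (insert x F)
  then show ?case by (simp add: power_int_add)
qed

lemma minus_one_powi: "(-1::real) powi k = (if even k then 1 else -1)"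
  by (simp add: power_int_minus_left)

lemma LHS_reduce:
  fixes d p :: int
  assumes "d > 0"
  shows "(\<Prod>c\<in>{c::int. 0 < c \<and> real_of_int c < real_of_int d / 2}.
            (-1::real) powi (\<lfloor>real_of_int (p * c) / real_of_int d\<rfloor> * kronecker d c))
         = (if even (\<Sum>c\<in>Hs d. (p*c) div d) then 1 else -1)"
proof -
  define S where "S = {c::int. 0 < c \<and> 2 * c < d}"
  have Seq: "{c::int. 0 < c \<and> real_of_int c < real_of_int d / 2} = S"
    unfolding S_def by auto
  have fS: "finite S"
  proof -
    have "S \<subseteq> {0..d}" by (auto simp: S_def)
    then show ?thesis by (rule finite_subset) simp
  qed
  have fl: "\<lfloor>real_of_int (p * c) / real_of_int d\<rfloor> = (p*c) div d" for c
    by (rule floor_divide_of_int_eq)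
  define E where "E = (\<Sum>c\<in>S. (p*c) div d * kronecker d c)"
  have lhs: "(\<Prod>c\<in>{c::int. 0 < c \<and> real_of_int c < real_of_int d / 2}.
            (-1::real) powi (\<lfloor>real_of_int (p * c) / real_of_int d\<rfloor> * kronecker d c)) = (if even E then 1 else -1)"
    unfolding Seq fl E_def by (subst prod_powi[OF fS]) (rule minus_one_powi)
  have HsS: "(\<Sum>c\<in>Hs d. (p*c) div d) = (\<Sum>c\<in>S. if coprime c d then (p*c) div d else 0)"
  proof -
    have "Hs d = {c\<in>S. coprime c d}" by (auto simp: Hs_def S_def)
    then show ?thesis using fS by (simp add: sum.inter_filter)
  qed
  have "even (E - (\<Sum>c\<in>Hs d. (p*c) div d))"
  proof -
    have "E - (\<Sum>c\<in>Hs d. (p*c) div d) = (\<Sum>c\<in>S. (p*c) div d * kronecker d c - (if coprime c d then (p*c) div d else 0))"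
      unfolding E_def HsS by (simp add: sum_subtractf)
    also have "even \<dots>"
    proof (rule dvd_sum)
      fix c assume "c \<in> S"
      then have c0: "c > 0" by (simp add: S_def)
      show "even ((p*c) div d * kronecker d c - (if coprime c d then (p*c) div d else 0))"
      proof (cases "coprime c d")
        case True
        then have "odd (kronecker d c)" using kron_odd c0 by blast
        then have "even (kronecker d c - 1)" by simp
        then have "even ((p*c) div d * (kronecker d c - 1))" by simp
        then show ?thesis using True by (simp add: algebra_simps)
      next
        case False
        then show ?thesis using kron_zero c0 by simp
      qed
    qed
    finally show ?thesis .
  qed
  then have "even E \<longleftrightarrow> even (\<Sum>c\<in>Hs d. (p*c) div d)"
    by (simp add: even_diff_iff even_add)
  then show ?thesis using lhs by simp
qed




lemma leg2:
  fixes p :: int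
  assumes pp: "prime p" and p2: "p > 2"
  shows "Legendre 2 p = (if p mod 8 = 1 \<or> p mod 8 = 7 then 1 else -1)"
proof -
  define P where "P = nat p"
  have pP: "p = int P" using p2 by (simp add: P_def)
  have G: "GAUSS P 2"
    unfolding GAUSS_def
  proof (intro conjI)
    show "prime P" using pp p2 by (simp add: P_def prime_nat_iff_prime)
    show "2 < P" using p2 by (simp add: P_def)
    show "[2 \<noteq> 0] (mod int P)" using p2 pP by (simp add: cong_0_iff zdvd_not_zless)
    show "(0::int) < 2" by simp
  qed
  define h where "h = (p - 1) div 2"
  have podd: "odd p" using pp p2 by (metis prime_odd_int)
  have E: "GAUSS.E P 2 = (\<lambda>x. 2*x) ` {h div 2<..h}"
  proof -
    have m: "(x*2) mod p = 2*x" if "x \<in> {0<..h}" for x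
    proof -
      have "0 \<le> 2*x" "2*x < p" using that podd p2 unfolding h_def by auto
      then show ?thesis by (subst mult.commute) (rule mod_pos_pos_trivial)
    qed
    have "GAUSS.E P 2 = (\<lambda>x. (x*2) mod p) ` {0<..h} \<inter> {h<..}"
      using G by (simp add: GAUSS.E_def GAUSS.C_def GAUSS.B_def GAUSS.A_def image_image pP[symmetric] h_def)
    also have "\<dots> = (\<lambda>x. 2*x) ` {0<..h} \<inter> {h<..}"
      using m by (intro arg_cong2[where f="(\<inter>)"] image_cong) auto
    also have "\<dots> = (\<lambda>x. 2*x) ` {h div 2<..h}"
    proof
      show "(\<lambda>x. 2*x) ` {0<..h} \<inter> {h<..} \<subseteq> (\<lambda>x. 2*x) ` {h div 2<..h}"
      proof
        fix y assume "y \<in> (\<lambda>x. 2*x) ` {0<..h} \<inter> {h<..}"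
        then obtain x where "x \<in> {0<..h}" "y = 2*x" "h < y" by auto
        then have "x \<in> {h div 2<..h}" by auto
        then show "y \<in> (\<lambda>x. 2*x) ` {h div 2<..h}" using \<open>y = 2*x\<close> by blast
      qed
      show "(\<lambda>x. 2*x) ` {h div 2<..h} \<subseteq> (\<lambda>x. 2*x) ` {0<..h} \<inter> {h<..}"
      proof
        fix y assume "y \<in> (\<lambda>x. 2*x) ` {h div 2<..h}"
        then obtain x where x: "x \<in> {h div 2<..h}" "y = 2*x" by auto
        have "h div 2 \<ge> 0" using p2 unfolding h_def by simp
        then have "x \<in> {0<..h}" "h < y" using x by auto
        then show "y \<in> (\<lambda>x. 2*x) ` {0<..h} \<inter> {h<..}" using x by blast
      qed
    qed
    finally show ?thesis .
  qed
  have "card (GAUSS.E P 2) = nat (h - h div 2)"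
    unfolding E by (subst card_image) (auto simp: inj_on_def)
  then have L: "Legendre 2 p = (-1) ^ nat (h - h div 2)"
    using GAUSS.gauss_lemma[OF G] pP by simp
  have "even (nat (h - h div 2)) \<longleftrightarrow> even (h - h div 2)"
    using p2 unfolding h_def by (intro even_nat_iff) simp
  also have "\<dots> \<longleftrightarrow> p mod 8 = 1 \<or> p mod 8 = 7"
    using podd unfolding h_def by presburger
  finally show ?thesis using L by (auto simp: minus_one_power_iff)
qed




definition psi4 :: "int \<Rightarrow> int" where
  "psi4 x = (if x mod 4 = 1 then 1 else -1)"

definition psi8 :: "int \<Rightarrow> int" where
  "psi8 x = (if x mod 8 = 1 \<or> x mod 8 = 3 then 1 else -1)"

lemma psi4_mult: "odd x \<Longrightarrow> odd y \<Longrightarrow> psi4 (x*y) = psi4 x * psi4 y"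
proof -
  assume "odd x" "odd y"
  then have hx: "x mod 4 = 1 \<or> x mod 4 = 3" and hy: "y mod 4 = 1 \<or> y mod 4 = 3" by presburger+
  have "(x*y) mod 4 = ((x mod 4) * (y mod 4)) mod 4" by (simp add: mod_mult_eq)
  then show ?thesis using hx hy unfolding psi4_def by auto
qed

lemma psi8_mult: "odd x \<Longrightarrow> odd y \<Longrightarrow> psi8 (x*y) = psi8 x * psi8 y"
proof -
  assume "odd x" "odd y"
  then have hx: "x mod 8 = 1 \<or> x mod 8 = 3 \<or> x mod 8 = 5 \<or> x mod 8 = 7"
    and hy: "y mod 8 = 1 \<or> y mod 8 = 3 \<or> y mod 8 = 5 \<or> y mod 8 = 7" by presburger+
  have "(x*y) mod 8 = ((x mod 8) * (y mod 8)) mod 8" by (simp add: mod_mult_eq)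
  then show ?thesis using hx hy unfolding psi8_def by auto
qed

lemma psi4_mod: "4 dvd d \<Longrightarrow> psi4 (x mod d) = psi4 x"
  unfolding psi4_def by (simp add: mod_mod_cancel)

lemma psi8_mod: "8 dvd d \<Longrightarrow> psi8 (x mod d) = psi8 x"
  unfolding psi8_def by (simp add: mod_mod_cancel)

lemma psi4_half: "odd m \<Longrightarrow> odd x \<Longrightarrow> psi4 (2*m - x) = psi4 x"
  unfolding psi4_def by presburger

lemma psi8_half: "odd m \<Longrightarrow> odd x \<Longrightarrow> psi8 (4*m - x) = psi8 x"
  unfolding psi8_def by presburger

lemma psi4_neg: "odd x \<Longrightarrow> psi4 (- x) = - psi4 x"
  unfolding psi4_def by presburger

lemma psi8_neg: "odd x \<Longrightarrow> psi8 (- x) = - psi8 x"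
  unfolding psi8_def by presburger

lemma pm_one_cong:
  fixes x y m :: int
  assumes "x = 1 \<or> x = -1" "y = 1 \<or> y = -1" "[x = y] (mod m)" "m > 2"
  shows "x = y"
proof (rule ccontr)
  assume "x \<noteq> y"
  then have "m dvd 2 \<or> m dvd -2" using assms by (auto simp: cong_iff_dvd_diff)
  then have "m dvd 2" by simp
  then have "m \<le> 2" by (simp add: zdvd_imp_le)
  then show False using assms by simp
qed

lemma split_comp:
  fixes x :: int
  assumes "x > 1" "\<not> prime x" "squarefree x"
  shows "\<exists>q r. prime q \<and> x = q * r \<and> r > 1 \<and> coprime q r"
proof -
  have "x \<noteq> 0" "\<not> is_unit x" using assms by auto
  then obtain q where q: "prime q" "q dvd x" using prime_divisor_exists by blast
  define r where "r = x div q"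
  have q0: "q > 0" using q by (simp add: prime_gt_0_int)
  have xr: "x = q * r" using q by (simp add: r_def)
  have "0 < q * r" using xr assms by simp
  then have "r > 0" using q0 by (metis zero_less_mult_pos)
  moreover have "r \<noteq> 1" using xr q assms by auto
  ultimately have r1: "r > 1" by simp
  have "coprime q r"
  proof (rule ccontr)
    assume "\<not> coprime q r"
    then have "q dvd r" using q prime_imp_coprime by blast
    then have "q^2 dvd x" using xr by (simp add: power2_eq_square)
    then have "q dvd 1" using assms(3) by (simp add: squarefree_def)
    then show False using q by (meson not_prime_unit)
  qed
  then show ?thesis using q xr r1 by blast
qed

lemma totient_int_mult:
  fixes q r :: int
  assumes "q > 0" "r > 0" "coprime q r"
  shows "totient (nat (q*r)) = totient (nat q) * totient (nat r)"
proof -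
  have "coprime (nat q) (nat r)" using assms by (metis coprime_int_iff int_nat_eq less_imp_le)
  then show ?thesis using assms by (simp add: nat_mult_distrib totient_mult_coprime)
qed

lemma fermat_int:
  fixes p q :: int
  assumes "prime q" "prime p" "p \<noteq> q"
  shows "[p ^ (nat q - 1) = 1] (mod q)"
proof -
  have q0: "q \<ge> 0" "p \<ge> 0" using assms by (auto simp: prime_ge_0_int)
  have pq: "prime (nat q)" "prime (nat p)" using assms by (simp_all add: prime_nat_iff_prime)
  have "\<not> nat q dvd nat p"
  proof
    assume "nat q dvd nat p"
    then have "nat q = nat p" using pq by (simp add: primes_dvd_imp_eq)
    then show False using assms q0 by simp
  qed
  then have "[nat p ^ (nat q - 1) = 1] (mod nat q)" using fermat_theorem[OF pq(1)] by blast
  then have "[int (nat p ^ (nat q - 1)) = int 1] (mod int (nat q))" by (simp only: cong_int_iff)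
  then show ?thesis using q0 by simp
qed




abbreviation "Ep d p \<equiv> (\<Sum>c\<in>Hs d. (p*c) div d)"

lemma psi_pm: "psi4 x = 1 \<or> psi4 x = -1" "psi8 x = 1 \<or> psi8 x = -1"
  by (simp_all add: psi4_def psi8_def)

lemma caseB1:
  fixes d p m :: int
  assumes dm: "d = 4 * m" and d1: "d > 1" and m3: "m mod 4 = 3" and sf: "squarefree m"
    and pp: "prime p" and podd: "odd p" and npd: "\<not> p dvd d"
  shows "even (Ep d p)"
proof -
  have m2: "m > 2" using d1 dm m3 by presburger
  have modd: "odd m" using m3 by presburger
  define n where "n = 2 * m"
  have dn: "d = 2 * n" using dm n_def by simp
  have n2: "n > 2" using m2 n_def by simp
  have ne: "even n" using n_def by simp
  have cp: "coprime p d" using pp npd by (simp add: prime_imp_coprime)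
  define \<nu> where "\<nu> = card {c\<in>Hs n. \<not> 2 * ((p*c) mod d) < d}"
  have PS: "Ep d p = int (card (Hs n)) * ((p - 1) div 2) - int \<nu>"
    unfolding \<nu>_def by (rule pair_sum[OF dn n2 ne cp])
  have PSI: "psi4 p ^ card (Hs n) = (-1) ^ \<nu>"
    unfolding \<nu>_def
  proof (rule psi_lemma[OF dn n2 ne cp])
    show "\<And>x y. odd x \<Longrightarrow> odd y \<Longrightarrow> psi4 (x*y) = psi4 x * psi4 y" by (rule psi4_mult)
    show "\<And>x. psi4 (x mod d) = psi4 x" using dm by (intro psi4_mod) simp
    show "\<And>x. odd x \<Longrightarrow> psi4 (n - x) = psi4 x" unfolding n_def using modd by (rule psi4_half)
    show "\<And>x. odd x \<Longrightarrow> psi4 (- x) = - psi4 x" by (rule psi4_neg)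
    show "\<And>x. odd x \<Longrightarrow> psi4 x \<noteq> 0" by (simp add: psi4_def)
  qed
  have "2 * card (Hs n) = totient (nat n)" by (rule card_Hs_totient[OF n2])
  also have "\<dots> = totient (nat 2) * totient (nat m)"
    unfolding n_def using m2 modd by (intro totient_int_mult) auto
  also have "totient (nat 2) = 1" by (simp add: totient_prime)
  finally have cH: "2 * card (Hs n) = totient (nat m)" by simp
  have pm: "psi4 p = 1 \<or> psi4 p = -1" by (rule psi_pm)
  show ?thesis
  proof (cases "prime m")
    case True
    then have "2 * card (Hs n) = nat m - 1" using cH by (simp add: prime_nat_iff_prime totient_prime)
    then have ci: "int (card (Hs n)) = (m - 1) div 2" using m2 by linarith
    have "odd (int (card (Hs n)))" unfolding ci using m3 by presburger
    then have codd: "odd (card (Hs n))" by simp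
    have "psi4 p ^ card (Hs n) = psi4 p" using pm codd by auto
    then have P1: "psi4 p = (-1) ^ \<nu>" using PSI by simp
    have "even ((p - 1) div 2) \<longleftrightarrow> p mod 4 = 1" using podd by presburger
    also have "\<dots> \<longleftrightarrow> psi4 p = 1" by (simp add: psi4_def)
    also have "\<dots> \<longleftrightarrow> even \<nu>" using P1 by (simp add: minus_one_power_iff)
    finally have tv: "even ((p - 1) div 2) \<longleftrightarrow> even (int \<nu>)" by simp
    have "even (int (card (Hs n)) * ((p - 1) div 2)) \<longleftrightarrow> even ((p - 1) div 2)"
      using \<open>odd (int (card (Hs n)))\<close> by simp
    then show ?thesis unfolding PS using tv by (simp add: even_diff_iff)
  next
    case False
    have m1: "m > 1" using m2 by simp
    obtain q r where qr: "prime q" "m = q * r" "r > 1" "coprime q r" using split_comp[OF m1 False sf] by blast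
    have q0: "q > 0" using qr by (simp add: prime_gt_0_int)
    have qodd: "odd q" using qr modd by auto
    have rodd: "odd r" using qr modd by auto
    have "r \<noteq> 2" using rodd by auto
    then have r3: "nat r > 2" using qr(3) by linarith
    have "totient (nat m) = totient (nat q) * totient (nat r)" using qr q0 by (simp add: totient_int_mult)
    also have "totient (nat q) = nat q - 1" using qr by (simp add: prime_nat_iff_prime totient_prime)
    finally have tm: "totient (nat m) = (nat q - 1) * totient (nat r)" .
    have "even (nat q - 1)" using qodd q0 by (simp add: even_nat_iff)
    then obtain a where a: "nat q - 1 = 2 * a" by blast
    obtain b where b: "totient (nat r) = 2 * b" using totient_even[OF r3] by blast
    have "card (Hs n) = 2 * (a * b)" using cH tm a b by simp
    then have ce: "even (card (Hs n))" by simp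
    have "psi4 p ^ card (Hs n) = 1" using pm ce by auto
    then have "even \<nu>" using PSI by (simp add: minus_one_power_iff split: if_splits)
    then show ?thesis unfolding PS using ce by simp
  qed
qed

lemma leg8:
  fixes p :: int
  assumes pp: "prime p" and p2: "p > 2"
  shows "Legendre 8 p = Legendre 2 p"
proof -
  define P where "P = nat p"
  have pP: "int P = p" using p2 by (simp add: P_def)
  have PP: "prime P" "2 < P" using pp p2 by (simp_all add: P_def prime_nat_iff_prime)
  have podd: "odd p" using pp p2 by (metis prime_odd_int)
  have Podd: "odd P" using podd pP by (metis even_of_nat_iff)
  define k where "k = (P - 1) div 2"
  have k2: "P - 1 = 2 * k" using Podd unfolding k_def by presburger
  have E8: "[Legendre 8 p = 8 ^ k] (mod p)" using euler_criterion[OF PP, of 8] pP k_def by simp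
  have E2: "[Legendre 2 p = 2 ^ k] (mod p)" using euler_criterion[OF PP, of 2] pP k_def by simp
  have F: "[2 ^ (nat p - 1) = 1] (mod p)" using fermat_int[of p 2] pp p2 by simp
  have "(8::int) ^ k = 2 ^ k * 2 ^ (nat p - 1)"
  proof -
    have "(8::int) ^ k = (2 * 2 ^ 2) ^ k" by simp
    also have "\<dots> = 2 ^ k * 2 ^ (2 * k)" by (simp only: power_mult_distrib power_mult)
    finally show ?thesis using k2 P_def by simp
  qed
  moreover have "[2 ^ k * 2 ^ (nat p - 1) = 2 ^ k * (1::int)] (mod p)" by (rule cong_mult[OF cong_refl F])
  ultimately have "[(8::int) ^ k = 2 ^ k] (mod p)" by simp
  then have C: "[Legendre 8 p = Legendre 2 p] (mod p)" using E8 E2 by (meson cong_sym cong_trans)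
  have n8: "\<not> p dvd 8"
  proof
    assume "p dvd 8"
    then have "p dvd 2 ^ 3" by simp
    then have "p dvd 2" using pp prime_dvd_power by blast
    then show False using p2 by (simp add: zdvd_not_zless)
  qed
  have n2: "\<not> p dvd 2" using p2 by (simp add: zdvd_not_zless)
  have "Legendre 8 p = 1 \<or> Legendre 8 p = -1" using n8 by (auto simp: Legendre_def cong_0_iff)
  moreover have "Legendre 2 p = 1 \<or> Legendre 2 p = -1" using n2 by (auto simp: Legendre_def cong_0_iff)
  ultimately show ?thesis using pm_one_cong C p2 by blast
qed

lemma caseB2:
  fixes d p k :: int
  assumes dk: "d = 8 * k" and kodd: "odd k" and k0: "k > 0"
    and pp: "prime p" and podd: "odd p" and npd: "\<not> p dvd d"
  shows "(k > 1 \<longrightarrow> even (Ep d p)) \<and> (k = 1 \<longrightarrow> Legendre d p = (if even (Ep d p) then 1 else -1))"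
proof -
  define n where "n = 4 * k"
  have dn: "d = 2 * n" using dk n_def by simp
  have n2: "n > 2" using k0 n_def by simp
  have ne: "even n" using n_def by simp
  have cp: "coprime p d" using pp npd by (simp add: prime_imp_coprime)
  have p2: "p > 2" using prime_ge_2_int[OF pp] podd by (cases "p = 2") auto
  define \<nu> where "\<nu> = card {c\<in>Hs n. \<not> 2 * ((p*c) mod d) < d}"
  have PS: "Ep d p = int (card (Hs n)) * ((p - 1) div 2) - int \<nu>"
    unfolding \<nu>_def by (rule pair_sum[OF dn n2 ne cp])
  have PSI: "psi8 p ^ card (Hs n) = (-1) ^ \<nu>"
    unfolding \<nu>_def
  proof (rule psi_lemma[OF dn n2 ne cp])
    show "\<And>x y. odd x \<Longrightarrow> odd y \<Longrightarrow> psi8 (x*y) = psi8 x * psi8 y" by (rule psi8_mult)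
    show "\<And>x. psi8 (x mod d) = psi8 x" using dk by (intro psi8_mod) simp
    show "\<And>x. odd x \<Longrightarrow> psi8 (n - x) = psi8 x" unfolding n_def using kodd by (rule psi8_half)
    show "\<And>x. odd x \<Longrightarrow> psi8 (- x) = - psi8 x" by (rule psi8_neg)
    show "\<And>x. odd x \<Longrightarrow> psi8 x \<noteq> 0" by (simp add: psi8_def)
  qed
  have "2 * card (Hs n) = totient (nat n)" by (rule card_Hs_totient[OF n2])
  also have "\<dots> = totient (nat 4) * totient (nat k)"
  proof -
    have "coprime 4 k" using kodd by (metis coprime_power_left_iff coprime_left_2_iff_odd power2_eq_square numeral_Bit0 mult_2 numeral_One one_add_one power2_eq_square) 
    then show ?thesis unfolding n_def using k0 by (intro totient_int_mult) auto
  qed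
  also have "totient (nat 4) = 2"
  proof -
    have "totient (2 ^ 2) = 2 ^ (2 - 1) * (2 - 1)" by (rule totient_prime_power) auto
    then show ?thesis by simp
  qed
  finally have cH: "card (Hs n) = totient (nat k)" by simp
  have pm: "psi8 p = 1 \<or> psi8 p = -1" by (rule psi_pm)
  show ?thesis
  proof (intro conjI impI)
    assume "k > 1"
    then have "nat k > 2" using kodd by (cases "k = 2") auto
    then have ce: "even (card (Hs n))" using cH totient_even by simp
    have "psi8 p ^ card (Hs n) = 1" using pm ce by auto
    then have "even \<nu>" using PSI by (simp add: minus_one_power_iff split: if_splits)
    then show "even (Ep d p)" unfolding PS using ce by simp
  next
    assume k1: "k = 1"
    then have "card (Hs n) = 1" using cH by simp
    then have P1: "psi8 p = (-1) ^ \<nu>" and PS1: "Ep d p = (p - 1) div 2 - int \<nu>" using PSI PS by simp_all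
    have "Legendre d p = (if p mod 8 = 1 \<or> p mod 8 = 7 then 1 else -1)"
      using leg8[OF pp p2] leg2[OF pp p2] dk k1 by simp
    moreover have "p mod 8 = 1 \<or> p mod 8 = 3 \<or> p mod 8 = 5 \<or> p mod 8 = 7" using podd by presburger
    moreover have "even \<nu> \<longleftrightarrow> psi8 p = 1" using P1 by (simp add: minus_one_power_iff)
    moreover have "even ((p - 1) div 2) \<longleftrightarrow> p mod 8 = 1 \<or> p mod 8 = 5" using podd by presburger
    ultimately show "Legendre d p = (if even (Ep d p) then 1 else -1)"
      unfolding PS1 psi8_def by (auto simp: even_diff_iff)
  qed
qed


lemma caseA_comp:
  fixes d p :: int
  assumes d1: "d > 1" and dodd: "odd d" and np: "\<not> prime d" and sf: "squarefree d"
    and pp: "prime p" and podd: "odd p" and npd: "\<not> p dvd d"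
  shows "even (Ep d p)"
proof -
  obtain q r where qr: "prime q" "d = q * r" "r > 1" "coprime q r" using split_comp[OF d1 np sf] by blast
  have q0: "q > 0" using qr by (simp add: prime_gt_0_int)
  have qodd: "odd q" using qr dodd by auto
  have q3: "q > 2" using prime_ge_2_int[OF qr(1)] qodd by (cases "q = 2") auto
  have rodd: "odd r" using qr dodd by auto
  have "r \<noteq> 2" using rodd by auto
  then have r3: "nat r > 2" using qr(3) by linarith
  have d2: "d > 2" using dodd d1 by presburger
  have cp: "coprime p d" using pp npd by (simp add: prime_imp_coprime)
  define \<mu> where "\<mu> = card {c\<in>Hs d. \<not> 2 * ((p*c) mod d) < d}"
  have G: "[p ^ card (Hs d) = (-1) ^ \<mu>] (mod d)" unfolding \<mu>_def by (rule gauss_prod[OF cp d2])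
  have par: "even (Ep d p + int \<mu>)" unfolding \<mu>_def by (rule odd_floor_parity[OF cp d2 dodd podd])
  have "2 * card (Hs d) = totient (nat d)" by (rule card_Hs_totient[OF d2])
  also have "\<dots> = totient (nat q) * totient (nat r)" using qr q0 by (simp add: totient_int_mult)
  also have "totient (nat q) = nat q - 1" using qr by (simp add: prime_nat_iff_prime totient_prime)
  finally have c2: "2 * card (Hs d) = (nat q - 1) * totient (nat r)" .
  obtain s where s: "totient (nat r) = 2 * s" using totient_even[OF r3] by blast
  have cH: "card (Hs d) = (nat q - 1) * s" using c2 s by simp
  have pq: "p \<noteq> q" using qr npd by auto
  have F: "[p ^ (nat q - 1) = 1] (mod q)" by (rule fermat_int[OF qr(1) pp pq])
  have "[p ^ card (Hs d) = 1] (mod q)"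
  proof -
    have "[(p ^ (nat q - 1)) ^ s = 1 ^ s] (mod q)" by (rule cong_pow[OF F])
    then show ?thesis by (simp add: cH power_mult)
  qed
  moreover have "[p ^ card (Hs d) = (-1) ^ \<mu>] (mod q)" using G qr by (metis cong_dvd_modulus dvd_triv_left)
  ultimately have "[(-1) ^ \<mu> = 1] (mod q)" by (meson cong_sym cong_trans)
  then have "even \<mu>"
  proof (rule contrapos_pp)
    assume "odd \<mu>"
    then have "[-1 = 1] (mod q)" using \<open>[(-1) ^ \<mu> = 1] (mod q)\<close> by simp
    then have "q dvd 2" by (simp add: cong_iff_dvd_diff)
    then have "q \<le> 2" by (simp add: zdvd_imp_le)
    then show "\<not> [(-1::int) ^ \<mu> = 1] (mod q)" using q3 by simp
  qed
  then show ?thesis using par by simp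
qed

lemma caseA_prime:
  fixes d p :: int
  assumes dp: "prime d" and d4: "d mod 4 = 1"
    and pp: "prime p" and podd: "odd p" and npd: "\<not> p dvd d"
  shows "Legendre d p = (if even (Ep d p) then 1 else -1)"
proof -
  have d2: "d > 2" using prime_ge_2_int[OF dp] d4 by (cases "d = 2") auto
  have dodd: "odd d" using d4 by presburger
  have p2: "p > 2" using prime_ge_2_int[OF pp] podd by (cases "p = 2") auto
  have cp: "coprime p d" using pp npd by (simp add: prime_imp_coprime)
  define \<mu> where "\<mu> = card {c\<in>Hs d. \<not> 2 * ((p*c) mod d) < d}"
  have G: "[p ^ card (Hs d) = (-1) ^ \<mu>] (mod d)" unfolding \<mu>_def by (rule gauss_prod[OF cp d2])
  have par: "even (Ep d p + int \<mu>)" unfolding \<mu>_def by (rule odd_floor_parity[OF cp d2 dodd podd])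
  have "2 * card (Hs d) = totient (nat d)" by (rule card_Hs_totient[OF d2])
  also have "\<dots> = nat d - 1" using dp by (simp add: prime_nat_iff_prime totient_prime)
  finally have cH: "card (Hs d) = (nat d - 1) div 2" by simp
  have dP: "prime (nat d)" "2 < nat d" using dp d2 by (simp_all add: prime_nat_iff_prime)
  have E: "[Legendre p (int (nat d)) = p ^ ((nat d - 1) div 2)] (mod int (nat d))"
    by (rule euler_criterion[OF dP])
  moreover have "int (nat d) = d" using d2 by simp
  ultimately have "[Legendre p d = p ^ card (Hs d)] (mod d)" using cH by simp
  then have "[Legendre p d = (-1) ^ \<mu>] (mod d)" using G by (rule cong_trans)
  moreover have "Legendre p d = 1 \<or> Legendre p d = -1"
  proof -
    have "\<not> d dvd p"
    proof
      assume "d dvd p"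
      then have "d = p" using dp pp by (simp add: primes_dvd_imp_eq)
      then show False using npd by simp
    qed
    then show ?thesis by (auto simp: Legendre_def cong_0_iff)
  qed
  moreover have "(-1::int) ^ \<mu> = 1 \<or> (-1::int) ^ \<mu> = -1" by (simp add: minus_one_power_iff)
  ultimately have L1: "Legendre p d = (-1) ^ \<mu>" using pm_one_cong d2 by blast
  have ld: "Legendre d p = 1 \<or> Legendre d p = -1"
    using npd by (auto simp: Legendre_def cong_0_iff)
  have "Legendre p d * Legendre d p = (-1) ^ nat ((p - 1) div 2 * ((d - 1) div 2))"
  proof -
    have "p \<noteq> d" using npd by auto
    then show ?thesis using Quadratic_Reciprocity_int[of p d] pp dp p2 d2 by (simp add: prime_nat_iff_prime)
  qed
  also have "even (nat ((p - 1) div 2 * ((d - 1) div 2)))"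
  proof -
    have "even ((d - 1) div 2)" using d4 by presburger
    then have "even ((p - 1) div 2 * ((d - 1) div 2))" by simp
    moreover have "0 \<le> (p - 1) div 2 * ((d - 1) div 2)" using p2 d2 by simp
    ultimately show ?thesis by (simp add: even_nat_iff)
  qed
  then have "(-1::int) ^ nat ((p - 1) div 2 * ((d - 1) div 2)) = 1" by simp
  finally have "Legendre p d * Legendre d p = 1" .
  then have "Legendre d p = (-1) ^ \<mu>" using L1 ld by (auto simp: minus_one_power_iff split: if_splits)
  then show ?thesis using par by (auto simp: minus_one_power_iff)
qed


theorem mainTheorem8:
  fixes d p :: int
  assumes "real_quad_disc d" and "prime p" and "odd p" and "\<not> p dvd d"
  shows "(\<Prod>c\<in>{c::int. 0 < c \<and> real_of_int c < real_of_int d / 2}.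
            (-1::real) powi (\<lfloor>real_of_int (p * c) / real_of_int d\<rfloor> * kronecker d c))
         = real_of_int (Legendre d p) ^ (if d = 8 \<or> prime d then 1 else 0)"
proof -
  have d1: "d > 1" using assms(1) by (simp add: real_quad_disc_def)
  have L: "(\<Prod>c\<in>{c::int. 0 < c \<and> real_of_int c < real_of_int d / 2}.
            (-1::real) powi (\<lfloor>real_of_int (p * c) / real_of_int d\<rfloor> * kronecker d c))
         = (if even (Ep d p) then 1 else -1)"
    using d1 by (intro LHS_reduce) simp
  have evnp: "\<not> prime d" if "even d" "d \<noteq> 2" using that d1 prime_odd_int[of d] by auto
  have C: "(d mod 4 = 1 \<and> squarefree d) \<or> (d mod 4 = 0 \<and> squarefree (d div 4) \<and> (d div 4) mod 4 \<in> {2, 3})"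
    using assms(1) by (simp add: real_quad_disc_def)
  show ?thesis
  proof (cases "d mod 4 = 1")
    case True
    then have sf: "squarefree d" using C by auto
    have d8: "d \<noteq> 8" using True by auto
    show ?thesis
    proof (cases "prime d")
      case True
      have "Legendre d p = (if even (Ep d p) then 1 else -1)"
        by (rule caseA_prime[OF True \<open>d mod 4 = 1\<close> assms(2,3,4)])
      then show ?thesis using L True by simp
    next
      case False
      have "odd d" using True by presburger
      then have "even (Ep d p)" using caseA_comp[OF d1 _ False sf assms(2,3,4)] by blast
      then show ?thesis using L False d8 by simp
    qed
  next
    case False
    then have C2: "d mod 4 = 0" "squarefree (d div 4)" "(d div 4) mod 4 \<in> {2, 3}" using C by auto
    define m where "m = d div 4"
    have dm: "d = 4 * m" using C2 unfolding m_def by presburger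
    have "d \<noteq> 2" using dm by presburger
    then have np: "\<not> prime d" using evnp dm by simp
    show ?thesis
    proof (cases "m mod 4 = 3")
      case True
      have "even (Ep d p)" by (rule caseB1[OF dm d1 True _ assms(2,3,4)]) (use C2 m_def in simp)
      moreover have "d \<noteq> 8" using True dm by auto
      ultimately show ?thesis using L np by simp
    next
      case False
      then have m2: "m mod 4 = 2" using C2 m_def by auto
      define k where "k = m div 2"
      have dk: "d = 8 * k" using m2 dm unfolding k_def by presburger
      have kodd: "odd k" using m2 unfolding k_def by presburger
      have k0: "k > 0" using dk d1 by simp
      note B = caseB2[OF dk kodd k0 assms(2,3,4)]
      show ?thesis
      proof (cases "k = 1")
        case True
        then have "Legendre d p = (if even (Ep d p) then 1 else -1)" and "d = 8" using B dk by auto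
        then show ?thesis using L by simp
      next
        case False
        then have "even (Ep d p)" using B k0 by simp
        moreover have "d \<noteq> 8" using dk False by auto
        ultimately show ?thesis using L np by simp
      qed
    qed
  qed
qed


end
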